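(* In the setting of the context, with $\alpha_k=\frac a{b+k}$, $a>0$, $b>1$, $\frac ab\le\frac1{2M\tilde L}$, put $t=2a\sigma_\ell^2$ and for $n\ge1$ let $T_n=\sum_{i=1}^nA_i^{(n)}C(\alpha_{i-1})$. If $t<1$ there is a constant $K$ independent of $n$ with $T_n\le K(b+n)^{-t}$ for all $n\ge1$; if $t>1$ there is a constant $K$ independent of $n$ with $T_n\le K(b+n)^{-1}$ for all $n\ge1$.
   Context: Standing setting: $M\ge N$, $A\in\mathbb{R}^{M\times N}$ of full column rank with rows $a_1,\dots,a_M$, right-hand side $(b_1,\dots,b_M)$, $F(x)=\frac12\|Ax-(b_1,\dots,b_M)^\top\|^2$, $F_*=\min F$; singular values $\sigma_1\ge\dots\ge\sigma_N>0$, $\tilde L=\max_i\|a_i\|^2$. Fix $\ell$. $C(\alpha)=2\alpha^2M\tilde LF_*$; for fixed $n$ and $0\le k\le n$, $A_k^{(n)}=\prod_{i=k}^n(1-2\alpha_i\sigma_\ell^2)$. (Step-size scalars $a,b$ are unrelated to $a_i,b_i$.) *)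

theory Defs
  imports "Jordan_Normal_Form.Char_Poly"
begin

definition full_col_rank :: "real mat \<Rightarrow> bool" where
  "full_col_rank A \<longleftrightarrow>
     (\<forall>x \<in> carrier_vec (dim_col A). A *\<^sub>v x = 0\<^sub>v (dim_row A) \<longrightarrow> x = 0\<^sub>v (dim_col A))"

text \<open>sigma 0 >= sigma 1 >= ... >= sigma (N-1) >= 0 are the singular values of A (with multiplicity),
  i.e. their squares are the eigenvalues (with multiplicity) of A^T A.
  (0-based: sigma i here is sigma_{i+1} of the paper.)\<close>
definition singular_values :: "real mat \<Rightarrow> (nat \<Rightarrow> real) \<Rightarrow> bool" where
  "singular_values A \<sigma> \<longleftrightarrow>
     (\<forall>i < dim_col A. \<sigma> i \<ge> 0) \<and>
     (\<forall>i j. i \<le> j \<longrightarrow> j < dim_col A \<longrightarrow> \<sigma> j \<le> \<sigma> i) \<and>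
     char_poly (transpose_mat A * A) = (\<Prod>i<dim_col A. [: - ((\<sigma> i)^2), 1 :])"

definition LSobj :: "real mat \<Rightarrow> real vec \<Rightarrow> real vec \<Rightarrow> real" where
  "LSobj A b x = (1/2) * (\<Sum>i<dim_row A. ((A *\<^sub>v x) $ i - b $ i)^2)"

definition Fstar :: "real mat \<Rightarrow> real vec \<Rightarrow> real" where
  "Fstar A b = (INF x \<in> carrier_vec (dim_col A). LSobj A b x)"

definition Ltil :: "real mat \<Rightarrow> real" where
  "Ltil A = Max ((\<lambda>i. \<Sum>j<dim_col A. (A $$ (i,j))^2) ` {..<dim_row A})"

definition Cconst :: "real mat \<Rightarrow> real vec \<Rightarrow> real \<Rightarrow> real" where
  "Cconst A b \<alpha> = 2 * \<alpha>^2 * real (dim_row A) * Ltil A * Fstar A b"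

definition Aprod :: "(nat \<Rightarrow> real) \<Rightarrow> real \<Rightarrow> nat \<Rightarrow> nat \<Rightarrow> real" where
  "Aprod \<alpha> s k n = (\<Prod>i=k..n. 1 - 2 * \<alpha> i * s^2)"

end

theory Submission
  imports Defs "HOL-Analysis.Convex"
begin

lemma factor_bound:
  fixes y t :: real assumes y: "y > 0" and t: "0 \<le> t"
  shows "1 - t/y \<le> (y/(y+1)) powr t"
proof -
  have e1: "1 - t/y \<le> exp (-(t/y))" using exp_ge_add_one_self[of "-(t/y)"] by simp
  have l1: "ln (1 + 1/y) \<le> 1/y" by (rule ln_add_one_self_le_self) (use y in simp)
  have yy: "y/(y+1) = inverse (1 + 1/y)" using y by (simp add: field_simps)
  have "ln (y/(y+1)) = - ln (1 + 1/y)" unfolding yy using y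
    by (simp add: ln_inverse add_pos_pos)
  hence "(y/(y+1)) powr t = exp (- (t * ln (1 + 1/y)))"
    using y by (simp add: powr_def)
  moreover have "-(t/y) \<le> - (t * ln (1 + 1/y))"
    using mult_left_mono[OF l1 t] by simp
  ultimately show ?thesis using e1 by (metis exp_le_cancel_iff order_trans)
qed

lemma prod_bound:
  fixes c t :: real assumes c: "c > 0" and t: "0 \<le> t" "t \<le> c" and i: "i \<le> n"
  shows "(\<Prod>j=i..n. 1 - t/(c + real j)) \<le> ((c + real i)/(c + real n + 1)) powr t"
  using i
proof (induction n rule: dec_induct)
  case base
  show ?case using factor_bound[of "c + real i" t] c t by simp
next
  case (step n)
  have nn: "0 \<le> 1 - t/(c + real (Suc n))" using c t by (simp add: field_simps)
  have "(\<Prod>j=i..Suc n. 1 - t/(c + real j)) = (1 - t/(c + real (Suc n))) * (\<Prod>j=i..n. 1 - t/(c + real j))"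
    using step by (simp add: prod.nat_ivl_Suc')
  also have "\<dots> \<le> ((c + real (Suc n))/(c + real (Suc n) + 1)) powr t * ((c + real i)/(c + real n + 1)) powr t"
    apply (rule mult_mono)
    using factor_bound[of "c + real (Suc n)" t] c t step.IH nn
    by (auto intro!: prod_nonneg simp: field_simps)
  also have "\<dots> = ((c + real (Suc n))/(c + real (Suc n) + 1) * ((c + real i)/(c + real n + 1))) powr t"
    by (rule powr_mult[symmetric])
  also have "(c + real (Suc n))/(c + real (Suc n) + 1) * ((c + real i)/(c + real n + 1)) = (c + real i)/(c + real (Suc n) + 1)"
  proof -
    have e: "c + real (Suc n) = c + real n + 1" by simp
    have nz: "c + real n + 1 \<noteq> 0" using c of_nat_0_le_iff[of n] by linarith
    show ?thesis unfolding e using nz by simp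
  qed
  finally show ?case .
qed

lemma term_tele:
  fixes p y :: real assumes p: "0 < p" "p < 1" and y: "y > 1"
  shows "p * y powr (p - 1) \<le> y powr p - (y - 1) powr p"
proof -
  have "((y-1)/y) powr p * 1 powr (1-p) \<le> p * ((y-1)/y) + (1-p) * 1"
    by (rule Youngs_inequality_0) (use p y in auto)
  hence h: "(y-1) powr p / y powr p \<le> 1 - p / y" using y by (simp add: powr_divide field_simps)
  have yp: "y powr p > 0" using y by simp
  have "(y-1) powr p \<le> (1 - p/y) * y powr p" using h yp by (simp add: divide_le_eq)
  also have "\<dots> = y powr p - p * (y powr p / y)" by (simp add: algebra_simps)
  also have "y powr p / y = y powr (p - 1)" using y by (simp add: powr_diff)
  finally show ?thesis by simp
qed

lemma sum_tele:
  fixes p c :: real assumes p: "0 < p" "p < 1" and c: "c > 0"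
  shows "(\<Sum>i=1..n. (c + real i) powr (p - 1)) \<le> ((c + real n) powr p - c powr p) / p"
proof (induction n)
  case 0 then show ?case by simp
next
  case (Suc n)
  have "p * (c + real (Suc n)) powr (p - 1) \<le> (c + real (Suc n)) powr p - (c + real (Suc n) - 1) powr p"
    by (rule term_tele) (use p c in auto)
  hence "(c + real (Suc n)) powr (p - 1) \<le> ((c + real (Suc n)) powr p - (c + real n) powr p) / p"
    using p by (simp add: field_simps)
  with Suc show ?case by (simp add: diff_divide_distrib)
qed


lemma term_tele_neg:
  fixes q y :: real assumes q: "q < 0" and y: "y > 1"
  shows "- q * y powr (q - 1) \<le> (y - 1) powr q - y powr q"
proof -
  have y0: "(y-1)/y > 0" using y by simp
  have "ln ((y-1)/y) \<le> (y-1)/y - 1" by (rule ln_le_minus_one[OF y0])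
  also have "\<dots> = - (1/y)" using y by (simp add: field_simps)
  finally have "q * ln ((y-1)/y) \<ge> q * (- (1/y))" using q by (intro mult_left_mono_neg) auto
  hence "exp (q * ln ((y-1)/y)) \<ge> 1 + q * (- (1/y))"
    using exp_ge_add_one_self[of "q * ln ((y-1)/y)"] by linarith
  hence h: "(y-1) powr q / y powr q \<ge> 1 - q / y" using y y0
    by (simp add: powr_def[of "(y-1)/y"] powr_divide[symmetric])
  have yp: "y powr q > 0" using y by simp
  have "(1 - q/y) * y powr q \<le> (y-1) powr q" using h yp by (simp add: le_divide_eq)
  moreover have "(1 - q/y) * y powr q = y powr q - q * (y powr q / y)" by (simp add: algebra_simps)
  moreover have "y powr q / y = y powr (q - 1)" using y by (simp add: powr_diff)
  ultimately show ?thesis by simp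
qed

lemma sum_tele_neg:
  fixes q c :: real assumes q: "q < 0" and c: "c > 0"
  shows "(\<Sum>i=1..n. (c + real i) powr (q - 1)) \<le> (c powr q - (c + real n) powr q) / (- q)"
proof (induction n)
  case 0 then show ?case by simp
next
  case (Suc n)
  have "- q * (c + real (Suc n)) powr (q - 1) \<le> (c + real (Suc n) - 1) powr q - (c + real (Suc n)) powr q"
    by (rule term_tele_neg) (use q c in auto)
  hence "(c + real (Suc n)) powr (q - 1) \<le> ((c + real n) powr q - (c + real (Suc n)) powr q) / (- q)"
    using q by (simp add: field_simps)
  with Suc show ?case by (simp add: diff_divide_distrib)
qed

lemma sv_bound:
  fixes A :: "real mat"
  assumes A: "A \<in> carrier_mat M N" and sv: "singular_values A \<sigma>" and l: "l < N" and M: "M > 0"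
  shows "(\<sigma> l)^2 \<le> real M * Ltil A"
proof -
  let ?s = "(\<sigma> l)^2"
  define B where "B = transpose_mat A * A"
  have dr: "dim_row A = M" and dc: "dim_col A = N" using A by auto
  have B: "B \<in> carrier_mat N N" using A unfolding B_def by auto
  have cp: "char_poly B = (\<Prod>i<N. [: - ((\<sigma> i)^2), 1 :])"
    using sv unfolding singular_values_def B_def dc by simp
  have "poly (char_poly B) ?s = (\<Prod>i<N. poly [: - ((\<sigma> i)^2), 1 :] ?s)"
    unfolding cp poly_prod by simp
  also have "\<dots> = 0" using l by (intro prod_zero) auto
  finally have "eigenvalue B ?s" using eigenvalue_root_char_poly[OF B] by simp
  then obtain v where v: "v \<in> carrier_vec N" "v \<noteq> 0\<^sub>v N" "B *\<^sub>v v = ?s \<cdot>\<^sub>v v"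
    unfolding eigenvalue_def eigenvector_def using B by auto
  define w where "w = A *\<^sub>v v"
  have w: "w \<in> carrier_vec M" using A v unfolding w_def by auto
  have Bv: "B *\<^sub>v v = transpose_mat A *\<^sub>v w" unfolding B_def w_def
    using A v by (simp add: assoc_mult_mat_vec)
  have "?s * (v \<bullet> v) = (B *\<^sub>v v) \<bullet> v" using v by simp
  also have "\<dots> = w \<bullet> w" unfolding Bv w_def
    by (rule transpose_vec_mult_scalar[OF A v(1)]) (use w w_def in auto)
  finally have eq: "?s * (v \<bullet> v) = w \<bullet> w" .
  have vv: "v \<bullet> v = (\<Sum>j<N. (v $ j)^2)" using v
    by (simp add: scalar_prod_def power2_eq_square lessThan_atLeast0)
  have "v \<bullet> v > 0"
  proof -
    obtain j where j: "j < N" "v $ j \<noteq> 0" using v(1,2) by (metis eq_vecI carrier_vecD index_zero_vec(1,2))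
    have "0 < (v $ j)^2" using j by simp
    also have "\<dots> \<le> (\<Sum>j<N. (v $ j)^2)" using j by (intro member_le_sum) auto
    finally show ?thesis using vv by simp
  qed
  have rowb: "(w $ i)^2 \<le> Ltil A * (v \<bullet> v)" if i: "i < M" for i
  proof -
    have "w $ i = (\<Sum>j<N. A $$ (i,j) * v $ j)" unfolding w_def using i v dr dc
      by (simp add: scalar_prod_def lessThan_atLeast0)
    hence c1: "(w $ i)^2 \<le> (\<Sum>j<N. (A $$ (i,j))^2) * (\<Sum>j<N. (v $ j)^2)"
      using Cauchy_Schwarz_ineq_sum by simp
    have c2: "(\<Sum>j<N. (A $$ (i,j))^2) \<le> Ltil A" unfolding Ltil_def dc dr
      using i by (intro Max_ge) auto
    have c3: "0 \<le> (\<Sum>j<N. (v $ j)^2)" by (intro sum_nonneg) auto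
    have "(\<Sum>j<N. (A $$ (i,j))^2) * (\<Sum>j<N. (v $ j)^2) \<le> Ltil A * (\<Sum>j<N. (v $ j)^2)"
      using c2 c3 by (rule mult_right_mono)
    with c1 show ?thesis unfolding vv by linarith
  qed
  have "w \<bullet> w = (\<Sum>i<M. (w $ i)^2)" using w
    by (simp add: scalar_prod_def power2_eq_square lessThan_atLeast0)
  also have "\<dots> \<le> (\<Sum>i<M. Ltil A * (v \<bullet> v))" by (intro sum_mono rowb) auto
  also have "\<dots> = real M * Ltil A * (v \<bullet> v)" by simp
  finally have "?s * (v \<bullet> v) \<le> real M * Ltil A * (v \<bullet> v)" using eq by simp
  thus ?thesis using \<open>v \<bullet> v > 0\<close> by simp
qed


lemma term_bound:
  fixes a c t :: real and i n :: nat
  assumes c: "c > 1" and t: "0 \<le> t" and i: "1 \<le> i" "i \<le> n"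
  shows "((c + real i)/(c + real n)) powr t * (a / (c + real (i - 1)))^2
         \<le> 4 * a^2 * (c + real n) powr (- t) * (c + real i) powr (t - 2)"
proof -
  define X where "X = (c + real i) powr t"
  define Y where "Y = (c + real n) powr (- t)"
  define Z where "Z = (c + real i) powr (t - 2)"
  have ci: "c + real i > 0" "c + real n > 0" using c by auto
  have i1: "c + real (i - 1) = c + real i - 1" using i by (simp add: of_nat_diff)
  have pos1: "c + real i - 1 > 0" using c by simp
  have le2: "c + real i \<le> 2 * (c + real i - 1)" using c i by simp
  have "(c + real i)^2 \<le> (2 * (c + real i - 1))^2" using le2 ci by (intro power_mono) auto
  also have "(2 * (c + real i - 1))^2 = 4 * (c + real i - 1)^2" by (simp only: power_mult_distrib) simp
  finally have "(c + real i)^2 \<le> 4 * (c + real i - 1)^2" .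
  hence q: "1 / (c + real i - 1)^2 \<le> 4 / (c + real i)^2"
    using pos1 ci by (simp add: frac_le_eq divide_le_eq le_divide_eq)
  have h1: "((c + real i)/(c + real n)) powr t = X * Y"
    unfolding X_def Y_def powr_divide powr_minus by (simp add: divide_inverse)
  have h2: "(a / (c + real (i - 1)))^2 = a^2 * (1 / (c + real i - 1)^2)"
    unfolding i1 by (simp add: power_divide)
  have h3: "X * (4 / (c + real i)^2) = 4 * Z"
  proof -
    have "(c + real i) powr 2 = (c + real i)^2" using ci by (simp add: powr_numeral)
    hence "Z = X / (c + real i)^2" unfolding X_def Z_def by (simp add: powr_diff)
    thus ?thesis by simp
  qed
  have X0: "X \<ge> 0" and Y0: "Y \<ge> 0" unfolding X_def Y_def by auto
  have "((c + real i)/(c + real n)) powr t * (a / (c + real (i - 1)))^2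
      = (Y * a^2) * (X * (1 / (c + real i - 1)^2))" unfolding h1 h2 by (simp only: mult_ac)
  also have "\<dots> \<le> (Y * a^2) * (X * (4 / (c + real i)^2))"
    using q X0 Y0 by (intro mult_left_mono) auto
  also have "\<dots> = 4 * a^2 * Y * Z" unfolding h3 by (simp only: mult_ac)
  finally show ?thesis unfolding Y_def Z_def .
qed

theorem lemma17:
  fixes A :: "real mat" and b :: "real vec" and M N :: nat
    and \<sigma> :: "nat \<Rightarrow> real" and l :: nat and a c :: real
    and \<alpha> :: "nat \<Rightarrow> real" and T :: "nat \<Rightarrow> real"
  assumes dims: "A \<in> carrier_mat M N" "b \<in> carrier_vec M" "M \<ge> N" "N > 0"
    and rank: "full_col_rank A"
    and sv: "singular_values A \<sigma>" "\<sigma> (N - 1) > 0"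
    and l: "l < N"
    and step: "\<And>k. \<alpha> k = a / (c + real k)"
    and a: "a > 0" and c: "c > 1" and ab: "a / c \<le> 1 / (2 * real M * Ltil A)"
    and T: "\<And>n. T n = (\<Sum>i=1..n. Aprod \<alpha> (\<sigma> l) i n * Cconst A b (\<alpha> (i - 1)))"
  shows "(2 * a * (\<sigma> l)^2 < 1 \<longrightarrow>
            (\<exists>K. \<forall>n \<ge> 1. T n \<le> K * (c + real n) powr (- (2 * a * (\<sigma> l)^2))))
       \<and> (2 * a * (\<sigma> l)^2 > 1 \<longrightarrow>
            (\<exists>K. \<forall>n \<ge> 1. T n \<le> K * (c + real n) powr (- 1)))"
proof -
  define s where "s = \<sigma> l"
  define t where "t = 2 * a * s^2"
  define D where "D = 2 * real M * Ltil A * Fstar A b"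
  define E where "E = 4 * a^2 * \<bar>D\<bar>"
  have Mpos: "M > 0" using dims by auto
  have sML: "s^2 \<le> real M * Ltil A" unfolding s_def by (rule sv_bound[OF dims(1) sv(1) l Mpos])
  have "\<sigma> (N - 1) \<le> \<sigma> l" using sv(1) l dims(1) unfolding singular_values_def by auto
  hence spos: "s > 0" using sv(2) unfolding s_def by simp
  hence "s^2 > 0" by simp
  hence MLpos: "real M * Ltil A > 0" using sML by linarith
  have "a * (2 * real M * Ltil A) \<le> c"
    using ab MLpos c by (simp add: field_simps)
  moreover have "2 * a * s^2 \<le> 2 * a * (real M * Ltil A)" using sML a by (intro mult_left_mono) auto
  ultimately have tc: "t \<le> c" unfolding t_def by (simp add: mult_ac)
  have t0: "0 \<le> t" unfolding t_def using a by simp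
  have cc: "\<And>x. Cconst A b x = D * x^2" unfolding Cconst_def D_def using dims(1) by simp
  have ap: "\<And>i n. Aprod \<alpha> s i n = (\<Prod>j=i..n. 1 - t/(c + real j))"
    unfolding Aprod_def t_def step by (intro prod.cong) auto
  have key: "T n \<le> E * (c + real n) powr (- t) * (\<Sum>i=1..n. (c + real i) powr (t - 2))"
    if n: "n \<ge> 1" for n
  proof -
    have "T n = (\<Sum>i=1..n. Aprod \<alpha> s i n * Cconst A b (\<alpha> (i - 1)))" unfolding T s_def ..
    also have "\<dots> \<le> (\<Sum>i=1..n. \<bar>D\<bar> * (4 * a^2 * (c + real n) powr (- t) * (c + real i) powr (t - 2)))"
    proof (intro sum_mono)
      fix i assume i: "i \<in> {1..n}"
      have P0: "0 \<le> (\<Prod>j=i..n. 1 - t/(c + real j))"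
        using tc c by (intro prod_nonneg) (auto simp: field_simps)
      have Pb: "(\<Prod>j=i..n. 1 - t/(c + real j)) \<le> ((c + real i)/(c + real n)) powr t"
      proof -
        have "(\<Prod>j=i..n. 1 - t/(c + real j)) \<le> ((c + real i)/(c + real n + 1)) powr t"
          using i c t0 tc by (intro prod_bound) auto
        also have "\<dots> \<le> ((c + real i)/(c + real n)) powr t"
          using c t0 by (intro powr_mono2 divide_left_mono mult_pos_pos) auto
        finally show ?thesis .
      qed
      have "Aprod \<alpha> s i n * Cconst A b (\<alpha> (i - 1)) \<le> (\<Prod>j=i..n. 1 - t/(c + real j)) * (\<bar>D\<bar> * (\<alpha> (i - 1))^2)"
        unfolding ap cc using P0 by (intro mult_left_mono) (auto simp: abs_le_iff mult_le_cancel_right)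
      also have "\<dots> \<le> ((c + real i)/(c + real n)) powr t * (\<bar>D\<bar> * (\<alpha> (i - 1))^2)"
        by (intro mult_right_mono Pb) auto
      also have "\<dots> = \<bar>D\<bar> * (((c + real i)/(c + real n)) powr t * (a / (c + real (i - 1)))^2)"
        unfolding step by simp
      also have "\<dots> \<le> \<bar>D\<bar> * (4 * a^2 * (c + real n) powr (- t) * (c + real i) powr (t - 2))"
        using i c t0 by (intro mult_left_mono term_bound) auto
      finally show "Aprod \<alpha> s i n * Cconst A b (\<alpha> (i - 1)) \<le> \<bar>D\<bar> * (4 * a^2 * (c + real n) powr (- t) * (c + real i) powr (t - 2))" .
    qed
    also have "\<dots> = E * (c + real n) powr (- t) * (\<Sum>i=1..n. (c + real i) powr (t - 2))"
      unfolding E_def by (simp add: sum_distrib_left mult_ac)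
    finally show ?thesis .
  qed
  have E0: "E \<ge> 0" unfolding E_def by simp
  have part1: "\<exists>K. \<forall>n \<ge> 1. T n \<le> K * (c + real n) powr (- t)" if t1: "t < 1"
  proof -
    define Z where "Z = c powr (t - 1) / (1 - t)"
    show ?thesis
    proof (intro exI allI impI)
      fix n :: nat assume n: "n \<ge> 1"
      have "(\<Sum>i=1..n. (c + real i) powr ((t - 1) - 1)) \<le> (c powr (t - 1) - (c + real n) powr (t - 1)) / (- (t - 1))"
        using t1 c by (intro sum_tele_neg) auto
      also have "\<dots> = (c powr (t - 1) - (c + real n) powr (t - 1)) / (1 - t)" by simp
      also have "\<dots> \<le> Z" unfolding Z_def using t1 by (intro divide_right_mono) auto
      finally have "(\<Sum>i=1..n. (c + real i) powr (t - 2)) \<le> Z" by (simp add: algebra_simps)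
      hence "E * (c + real n) powr (- t) * (\<Sum>i=1..n. (c + real i) powr (t - 2)) \<le> E * (c + real n) powr (- t) * Z"
        using E0 by (intro mult_left_mono) auto
      with key[OF n] show "T n \<le> (E * Z) * (c + real n) powr (- t)" by (simp add: mult_ac)
    qed
  qed
  have part2: "\<exists>K. \<forall>n \<ge> 1. T n \<le> K * (c + real n) powr (- 1)" if t1: "t > 1"
  proof -
    define K1 where "K1 = max 1 (1 / (t - 1))"
    have sb: "(\<Sum>i=1..n. (c + real i) powr (t - 2)) \<le> K1 * (c + real n) powr (t - 1)" for n
    proof (cases "t \<ge> 2")
      case True
      have "(\<Sum>i=1..n. (c + real i) powr (t - 2)) \<le> (\<Sum>i=1..n. (c + real n) powr (t - 2))"
        using True c by (intro sum_mono powr_mono2) auto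
      also have "\<dots> = real n * (c + real n) powr (t - 2)" by simp
      also have "\<dots> \<le> (c + real n) * (c + real n) powr (t - 2)"
        using c by (intro mult_right_mono) auto
      also have "\<dots> = (c + real n) powr 1 * (c + real n) powr (t - 2)" using c by simp
      also have "\<dots> = (c + real n) powr (1 + (t - 2))" by (rule powr_add[symmetric])
      also have "\<dots> = (c + real n) powr (t - 1)" by simp
      also have "\<dots> \<le> K1 * (c + real n) powr (t - 1)"
        using mult_right_mono[of 1 K1 "(c + real n) powr (t - 1)"] unfolding K1_def by simp
      finally show ?thesis .
    next
      case False
      have "(\<Sum>i=1..n. (c + real i) powr ((t - 1) - 1)) \<le> ((c + real n) powr (t - 1) - c powr (t - 1)) / (t - 1)"
        using False t1 c by (intro sum_tele) auto
      also have "\<dots> \<le> (c + real n) powr (t - 1) / (t - 1)"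
        using t1 by (intro divide_right_mono) auto
      also have "\<dots> \<le> K1 * (c + real n) powr (t - 1)"
        using mult_right_mono[of "1 / (t - 1)" K1 "(c + real n) powr (t - 1)"] unfolding K1_def by simp
      finally show ?thesis by (simp add: algebra_simps)
    qed
    show ?thesis
    proof (intro exI allI impI)
      fix n :: nat assume n: "n \<ge> 1"
      have cn: "c + real n > 0" using c by simp
      have "E * (c + real n) powr (- t) * (\<Sum>i=1..n. (c + real i) powr (t - 2))
            \<le> E * (c + real n) powr (- t) * (K1 * (c + real n) powr (t - 1))"
        using E0 sb by (intro mult_left_mono) auto
      also have "\<dots> = (E * K1) * ((c + real n) powr (- t) * (c + real n) powr (t - 1))" by (simp add: mult_ac)
      also have "(c + real n) powr (- t) * (c + real n) powr (t - 1) = (c + real n) powr (- 1)"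
      proof -
        have "(c + real n) powr (- t) * (c + real n) powr (t - 1) = (c + real n) powr (- t + (t - 1))"
          by (rule powr_add[symmetric])
        thus ?thesis by simp
      qed
      finally show "T n \<le> (E * K1) * (c + real n) powr (- 1)" using key[OF n] by simp
    qed
  qed
  show ?thesis using part1 part2 unfolding t_def s_def by blast
qed

end
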